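(* Let $k\ge 3$, let $F$ be a field, let $\Phi$ be a subgroup of $F^*$ of order $k$ with generator $\varphi$, and suppose $(F,\Phi)$ is circular. Let $K$ be any extension field of $F$. Then $(K,\Phi)$ is circular (i.e. $|(\Phi a+b)\cap \Phi c|\le 2$ for all $a,b,c\in K^*$), and $\mathcal{O}_\varphi(K,k)=\mathcal{O}_\varphi(F,k)$.
   Context: Notation: $\mathbf{k}=\{1,\dots,k-1\}$, $\mathbf{k}_0=\{0,1,\dots,k-1\}$. For a field $F$ and a subgroup $\Phi\le F^*$ of order $k$, and $a,b\in F$, put $\Phi a+b=\{\lambda a+b:\lambda\in\Phi\}$. The pair $(F,\Phi)$ is called circular if $|(\Phi a+b)\cap\Phi c|\le 2$ for all $a,b,c\in F^*$. Fix a generator $\varphi$ of $\Phi$. A quadruple $(i,j\mid s,t)$ with $i,j,s,t\in\mathbf{k}$ and $i\neq s$ is an overlap (with respect to $\varphi$) if $\frac{\varphi^j-1}{\varphi^i-1}\in\Phi\cdot\frac{\varphi^t-1}{\varphi^s-1}$, equivalently if there is $\omega\in\mathbf{k}_0$ with $\varphi^\omega(\varphi^j-1)(\varphi^s-1)=(\varphi^i-1)(\varphi^t-1)$. The overlap is trivial if at least one of the congruences $i\equiv\pm j$, $j\equiv\pm t$, $t\equiv\pm s$, $s\equiv\pm i \pmod k$ holds, and nontrivial otherwise. $\mathcal{O}_\varphi(F,k)$ denotes the set of all nontrivial overlaps with respect to $\varphi$. *)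

theory Defs
  imports "HOL-Number_Theory.Cong"
begin

definition cyc :: "'a::field \<Rightarrow> 'a set" where
  "cyc phi = {phi ^ n | n. True}"

definition circular :: "'a::field set \<Rightarrow> bool" where
  "circular Phi \<longleftrightarrow>
     (\<forall>a b c. a \<noteq> 0 \<longrightarrow> b \<noteq> 0 \<longrightarrow> c \<noteq> 0 \<longrightarrow>
        card ((\<lambda>l. l * a + b) ` Phi \<inter> (\<lambda>l. l * c) ` Phi) \<le> 2)"

definition is_overlap :: "'a::field \<Rightarrow> nat \<Rightarrow> nat \<times> nat \<times> nat \<times> nat \<Rightarrow> bool" where
  "is_overlap phi k q = (case q of (i, j, s, t) \<Rightarrow>
     i \<in> {1..<k} \<and> j \<in> {1..<k} \<and> s \<in> {1..<k} \<and> t \<in> {1..<k} \<and> i \<noteq> s \<and>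
     (\<exists>w\<in>{0..<k}. phi ^ w * (phi ^ j - 1) * (phi ^ s - 1) = (phi ^ i - 1) * (phi ^ t - 1)))"

definition trivial_overlap :: "nat \<Rightarrow> nat \<times> nat \<times> nat \<times> nat \<Rightarrow> bool" where
  "trivial_overlap k q = (case q of (i, j, s, t) \<Rightarrow>
     [i = j] (mod k) \<or> [i + j = 0] (mod k) \<or>
     [j = t] (mod k) \<or> [j + t = 0] (mod k) \<or>
     [t = s] (mod k) \<or> [t + s = 0] (mod k) \<or>
     [s = i] (mod k) \<or> [s + i = 0] (mod k))"

text \<open>The set O_phi(F,k) of nontrivial overlaps; the field F is the type of phi.\<close>
definition nontrivial_overlaps :: "'a::field \<Rightarrow> nat \<Rightarrow> (nat \<times> nat \<times> nat \<times> nat) set" where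
  "nontrivial_overlaps phi k = {q. is_overlap phi k q \<and> \<not> trivial_overlap k q}"

end

theory Submission
  imports Defs
begin

lemma three_elems:
  assumes "\<not> card T \<le> 2" "finite T"
  obtains x y z where "x \<in> T" "y \<in> T" "z \<in> T" "x \<noteq> y" "y \<noteq> z" "x \<noteq> z"
proof -
  obtain U where "U \<subseteq> T" "card U = 3" using obtain_subset_with_card_n[of 3 T] assms by force
  then show ?thesis using that card_3_iff[of U] by blast
qed

lemma aux: "(x - y) * r = (x*r + q) - (y*r + (q::'a::comm_ring))" by (simp add: algebra_simps)

lemma aux2: "c \<noteq> 0 \<Longrightarrow> x*a+b = m*c \<Longrightarrow> x*(a/c)+b/c = (m::'a::field)"
  by (simp add: field_simps)

theorem lemma8:
  fixes phi :: "'f::field" and k :: nat and h :: "'f \<Rightarrow> 'k::field"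
  assumes "k \<ge> 3"
    and "phi \<noteq> 0"
    and "card (cyc phi) = k"
    and "circular (cyc phi)"
    and "h 1 = 1"
    and "\<And>x y. h (x + y) = h x + h y"
    and "\<And>x y. h (x * y) = h x * h y"
  shows "circular (h ` cyc phi) \<and> nontrivial_overlaps (h phi) k = nontrivial_overlaps phi k"
proof -
  note hadd = assms(6) and hmul = assms(7)
  have h0: "h 0 = 0" using hadd[of 0 0] by (metis add.right_neutral add_left_cancel)
  have hminus: "h (x - y) = h x - h y" for x y
    using hadd[of "x - y" y] by (simp add: algebra_simps)
  have hinj: "h x = h y \<Longrightarrow> x = y" for x y
  proof (rule ccontr)
    assume "h x = h y" "x \<noteq> y"
    then have "h ((x - y) * inverse (x - y)) = 0" by (simp only: hmul hminus) simp
    then show False using \<open>x \<noteq> y\<close> assms(5) by simp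
  qed
  have hinv: "h (inverse x) = inverse (h x)" for x
  proof (cases "x = 0")
    case True then show ?thesis using h0 by simp
  next
    case False
    then have "h x * h (inverse x) = 1" using hmul[of x "inverse x"] assms(5) by simp
    then show ?thesis by (metis inverse_unique)
  qed
  have hdiv: "h (x / y) = h x / h y" for x y
    using hmul hinv by (simp add: divide_inverse)
  have hpow: "h (x ^ n) = h x ^ n" for x n
    by (induction n) (use assms(5) hmul in auto)
  have fin: "finite (cyc phi)" using assms(1,3) card.infinite by fastforce
  have circ: "circular (h ` cyc phi)"
    unfolding circular_def
  proof (intro allI impI)
    fix a b c :: 'k
    assume a: "a \<noteq> 0" and b: "b \<noteq> 0" and c: "c \<noteq> 0"
    let ?T = "(\<lambda>l. l * a + b) ` h ` cyc phi \<inter> (\<lambda>l. l * c) ` h ` cyc phi"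
    show "card ?T \<le> 2"
    proof (rule ccontr)
      assume "\<not> card ?T \<le> 2"
      moreover have "finite ?T" using fin by blast
      ultimately obtain x y z where xyz: "x \<in> ?T" "y \<in> ?T" "z \<in> ?T" "x \<noteq> y" "y \<noteq> z" "x \<noteq> z"
        by (rule three_elems)
      have mem: "\<exists>l m. l \<in> cyc phi \<and> m \<in> cyc phi \<and> v = h l * a + b \<and> v = h m * c" if "v \<in> ?T" for v
        using that by blast
      obtain l1 m1 where 1: "l1 \<in> cyc phi" "m1 \<in> cyc phi" "x = h l1 * a + b" "x = h m1 * c"
        using mem[OF xyz(1)] by blast
      obtain l2 m2 where 2: "l2 \<in> cyc phi" "m2 \<in> cyc phi" "y = h l2 * a + b" "y = h m2 * c"
        using mem[OF xyz(2)] by blast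
      obtain l3 m3 where 3: "l3 \<in> cyc phi" "m3 \<in> cyc phi" "z = h l3 * a + b" "z = h m3 * c"
        using mem[OF xyz(3)] by blast
      have e1: "h l1 * (a/c) + b/c = h m1" using 1 by (intro aux2[OF c]) metis
      have e2: "h l2 * (a/c) + b/c = h m2" using 2 by (intro aux2[OF c]) metis
      have e3: "h l3 * (a/c) + b/c = h m3" using 3 by (intro aux2[OF c]) metis
      have d12: "l1 \<noteq> l2" using 1(3) 2(3) xyz(4) by metis
      have d23: "l2 \<noteq> l3" using 2(3) 3(3) xyz(5) by metis
      have d13: "l1 \<noteq> l3" using 1(3) 3(3) xyz(6) by metis
      define A where "A = (m1 - m2) / (l1 - l2)"
      define B where "B = m1 - l1 * A"
      have hl: "h l1 - h l2 \<noteq> 0" by (metis d12 hinj eq_iff_diff_eq_0)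
      have "(h l1 - h l2) * (a/c) = (h l1*(a/c)+b/c) - (h l2*(a/c)+b/c)" by (rule aux)
      also have "\<dots> = h m1 - h m2" by (simp only: e1 e2)
      finally have "(h l1 - h l2) * (a/c) = h m1 - h m2" .
      then have eq: "h m1 - h m2 = (h l1 - h l2) * (a/c)" by simp
      have "h A = (h m1 - h m2)/(h l1 - h l2)" unfolding A_def by (simp only: hdiv hminus)
      also have "\<dots> = a/c" unfolding eq using hl by (rule nonzero_mult_div_cancel_left)
      finally have hA: "h A = a / c" .
      have "h B = h m1 - h l1 * (a/c)" unfolding B_def by (simp only: hminus hmul hA)
      also have "\<dots> = b/c" unfolding e1[symmetric] by (rule add_diff_cancel_left')
      finally have hB: "h B = b / c" .
      have A0: "A \<noteq> 0" using hA h0 a c by auto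
      have B0: "B \<noteq> 0" using hB h0 b c by auto
      have f: "l * A + B = m" if "h l * (a/c) + b/c = h m" for l m
        by (intro hinj) (simp only: hadd hmul hA hB that)
      let ?U = "(\<lambda>l. l * A + B) ` cyc phi \<inter> (\<lambda>l. l * 1) ` cyc phi"
      have sub: "{l1 * A + B, l2 * A + B, l3 * A + B} \<subseteq> ?U"
        using f[OF e1] f[OF e2] f[OF e3] 1(1,2) 2(1,2) 3(1,2) by auto
      have "card {l1 * A + B, l2 * A + B, l3 * A + B} = 3"
        using d12 d23 d13 A0 by auto
      moreover have "card {l1 * A + B, l2 * A + B, l3 * A + B} \<le> card ?U"
        using sub fin by (intro card_mono) auto
      moreover have "card ?U \<le> 2" using assms(4)[unfolded circular_def, rule_format, OF A0 B0 one_neq_zero] .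
      ultimately show False by simp
    qed
  qed
  have eqv: "h (phi ^ w * (phi ^ j - 1) * (phi ^ s - 1)) = h ((phi ^ i - 1) * (phi ^ t - 1))
     \<longleftrightarrow> phi ^ w * (phi ^ j - 1) * (phi ^ s - 1) = (phi ^ i - 1) * (phi ^ t - 1)" for w j s i t
    using hinj by metis
  have "is_overlap (h phi) k q = is_overlap phi k q" for q
    unfolding is_overlap_def by (cases q) (simp only: prod.case eqv[symmetric] hmul hminus hpow assms(5))
  then have "nontrivial_overlaps (h phi) k = nontrivial_overlaps phi k"
    unfolding nontrivial_overlaps_def by simp
  with circ show ?thesis by simp
qed

end
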